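(* Let $n$ be a positive integer and let $\mathbb{F}$ be a field with $\operatorname{char}(\mathbb{F})\neq 2$ and $|\mathbb{F}|\geq n^2+1$. Let $\Sigma_n$ denote the set of all $n\times n$ symmetric matrices over $\mathbb{F}$. If $a,b\in\Sigma_n$ satisfy $\det(a+x)=\det(b+x)$ for all $x\in\Sigma_n$, then $a=b$. *)

theory Defs
  imports "HOL-Analysis.Analysis"
begin

end

theory Submission imports Defs begin
lemma det_unit_rows:
  fixes A :: "'a::comm_ring_1^'n^'n"
  assumes unit: "\<And>k. k \<notin> T \<Longrightarrow> A$k = axis k 1"
  shows "det A = (\<Sum>p\<in>{p. p permutes T}. of_int (sign p) * (\<Prod>k\<in>T. A$k$p k))"
  unfolding det_def
proof (rule sum.mono_neutral_cong_right)
  show "finite {p. p permutes (UNIV::'n set)}" by (simp add: finite_permutations)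
  show "{p. p permutes T} \<subseteq> {p. p permutes (UNIV::'n set)}" by (auto intro: permutes_subset)
  show "\<forall>p\<in>{p. p permutes (UNIV::'n set)} - {p. p permutes T}.
      of_int (sign p) * (\<Prod>i\<in>UNIV. A $ i $ p i) = 0"
  proof
    fix p assume p: "p \<in> {p. p permutes (UNIV::'n set)} - {p. p permutes T}"
    have "\<exists>k. k \<notin> T \<and> p k \<noteq> k"
    proof (rule ccontr)
      assume "\<not> ?thesis"
      then have "p permutes T" using p unfolding permutes_def by auto
      then show False using p by auto
    qed
    then obtain k where k: "k \<notin> T" "p k \<noteq> k" by blast
    have "A $ k $ p k = 0" using unit[OF k(1)] k(2) by (simp add: axis_def)
    then have "(\<Prod>i\<in>UNIV. A $ i $ p i) = 0" by (metis UNIV_I finite prod_zero)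
    then show "of_int (sign p) * (\<Prod>i\<in>UNIV. A $ i $ p i) = 0" by simp
  qed
  fix p assume p: "p \<in> {p. p permutes T}"
  have "(\<Prod>i\<in>UNIV. A $ i $ p i) = (\<Prod>k\<in>T. A$k$p k)"
  proof (rule prod.mono_neutral_right)
    show "\<forall>i\<in>UNIV - T. A $ i $ p i = 1"
      using p unit by (auto simp: permutes_not_in axis_def)
  qed auto
  then show "of_int (sign p) * (\<Prod>i\<in>UNIV. A $ i $ p i) = of_int (sign p) * (\<Prod>k\<in>T. A$k$p k)" by simp
qed

lemma det_one_row:
  fixes A :: "'a::comm_ring_1^'n^'n"
  assumes unit: "\<And>k. k \<noteq> i \<Longrightarrow> A$k = axis k 1"
  shows "det A = A$i$i"
  using det_unit_rows[of "{i}" A] unit by simp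

lemma det_two_rows:
  fixes A :: "'a::comm_ring_1^'n^'n"
  assumes unit: "\<And>k. k \<noteq> i \<Longrightarrow> k \<noteq> j \<Longrightarrow> A$k = axis k 1" and ij: "i \<noteq> j"
  shows "det A = A$i$i * A$j$j - A$i$j * A$j$i"
proof -
  have "det A = (\<Sum>p\<in>{p. p permutes insert i {j}}. of_int (sign p) * (\<Prod>k\<in>{i,j}. A$k$p k))"
    using det_unit_rows[of "{i,j}" A] unit by simp
  also have "\<dots> = (\<Sum>b\<in>{i,j}. of_int (sign (Transposition.transpose i b)) * (\<Prod>k\<in>{i,j}. A$k$(Transposition.transpose i b k)))"
    by (subst sum_over_permutations_insert) (use ij in auto)
  also have "\<dots> = A$i$i * A$j$j - A$i$j * A$j$i"
    using ij by (simp add: sign_swap_id Transposition.transpose_def)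
  finally show ?thesis .
qed
definition Qm :: "'a::comm_ring_1^'n^'n \<Rightarrow> 'n set \<Rightarrow> ('n \<Rightarrow> 'a) \<Rightarrow> 'a^'n^'n" where
  "Qm c S d = (\<chi> k. if k \<in> S then axis k 1 else c$k + d k *s axis k 1)"

lemma Qm_induct:
  fixes c :: "'a::comm_ring_1^'n^'n"
  assumes H: "\<And>d. det (Qm c {} d) = (\<Prod>k\<in>UNIV. d k)"
  shows "finite S \<Longrightarrow> det (Qm c S d) = (\<Prod>k\<in>-S. d k)"
proof (induction S arbitrary: d rule: finite_induct)
  case empty
  then show ?case using H by simp
next
  case (insert i S)
  have split: "det (Qm c S d') = det (Qm c S (d'(i:=0))) + d' i * det (Qm c (insert i S) d')" for d'
  proof -
    have e1: "Qm c S d' = (\<chi> k. if k = i then c$i + d' i *s axis i 1 else Qm c S d' $ k)"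
      using insert(2) by (auto simp: vec_eq_iff Qm_def)
    have e2: "(\<chi> k. if k = i then c$i else Qm c S d' $ k) = Qm c S (d'(i:=0))"
      using insert(2) by (auto simp: vec_eq_iff Qm_def)
    have e3: "(\<chi> k. if k = i then axis i 1 else Qm c S d' $ k) = Qm c (insert i S) d'"
      by (auto simp: vec_eq_iff Qm_def)
    have "det (Qm c S d') = det (\<chi> k. if k = i then c$i else Qm c S d' $ k)
        + det (\<chi> k. if k = i then d' i *s axis i 1 else Qm c S d' $ k)"
      by (subst e1) (rule det_row_add)
    also have "det (\<chi> k. if k = i then d' i *s axis i 1 else Qm c S d' $ k)
        = d' i * det (\<chi> k. if k = i then axis i 1 else Qm c S d' $ k)"
      by (rule det_row_mul)
    finally show ?thesis by (simp only: e2 e3)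
  qed
  have z: "det (Qm c S (d'(i:=0))) = 0" for d'
  proof -
    have "(\<Prod>x\<in>-S. (d'(i:=0)) x) = 0" by (rule prod_zero) (use insert(2) in auto)
    then show ?thesis using insert.IH[of "d'(i:=0)"] by (simp add: fun_upd_def)
  qed
  have rem: "(\<Prod>k\<in>-S. d' k) = d' i * (\<Prod>k\<in>-insert i S. d' k)" for d'
  proof -
    have "-S = insert i (-insert i S)" using insert(2) by auto
    then show ?thesis by simp
  qed
  have key: "d' i * det (Qm c (insert i S) d') = d' i * (\<Prod>k\<in>-insert i S. d' k)" for d'
    using split[of d'] z[of d'] insert.IH[of d'] rem[of d'] by simp
  have q1: "Qm c (insert i S) (d(i:=1)) = Qm c (insert i S) d"
    by (auto simp: vec_eq_iff Qm_def)
  have p1: "(\<Prod>k\<in>-insert i S. (d(i:=1)) k) = (\<Prod>k\<in>-insert i S. d k)"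
    by (rule prod.cong) auto
  show ?case using key[of "d(i:=1)"] q1 p1 by simp
qed

theorem lemma2p1:
  fixes a b :: "'a::field ^ 'n ^ 'n"
  assumes char: "(2::'a) \<noteq> 0"
    and card: "infinite (UNIV :: 'a set) \<or> CARD('a) \<ge> CARD('n)^2 + 1"
    and sym_a: "transpose a = a"
    and sym_b: "transpose b = b"
    and dets: "\<forall>x :: 'a ^ 'n ^ 'n. transpose x = x \<longrightarrow> det (a + x) = det (b + x)"
  shows "a = b"
proof -
  define c where "c = b - a"
  have symc: "c$j$i = c$i$j" for i j
  proof -
    have "transpose c = c" using sym_a sym_b unfolding c_def
      by (simp add: vec_eq_iff transpose_def)
    then show ?thesis by (metis transpose_def vec_lambda_beta)
  qed
  have H: "det (Qm c {} d) = (\<Prod>k\<in>UNIV. d k)" for d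
  proof -
    define D where "D = ((\<chi> i j. if i = j then d i else 0) :: 'a^'n^'n)"
    define x where "x = D - a"
    have "transpose D = D" unfolding D_def by (simp add: vec_eq_iff transpose_def)
    then have "transpose x = x" unfolding x_def using sym_a
      by (simp add: vec_eq_iff transpose_def)
    then have "det (a + x) = det (b + x)" using dets by blast
    moreover have "a + x = D" unfolding x_def by simp
    moreover have "b + x = Qm c {} d" unfolding x_def c_def D_def Qm_def
      by (auto simp: vec_eq_iff axis_def)
    moreover have "det D = (\<Prod>k\<in>UNIV. d k)" unfolding D_def
      by (subst det_diagonal) auto
    ultimately show ?thesis by simp
  qed
  note Q = Qm_induct[OF H]
  have diag: "c$i$i = 0" for i
  proof -
    have "det (Qm c (-{i}) (\<lambda>_. 0)) = 0" using Q[of "-{i}" "\<lambda>_. 0"] by simp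
    moreover have "det (Qm c (-{i}) (\<lambda>_. 0)) = c$i$i"
      by (subst det_one_row[of i]) (auto simp: Qm_def)
    ultimately show ?thesis by simp
  qed
  have off: "c$i$j = 0" if ij: "i \<noteq> j" for i j
  proof -
    have "det (Qm c (-{i,j}) (\<lambda>_. 0)) = 0" using Q[of "-{i,j}" "\<lambda>_. 0"] by (simp add: card_gt_0_iff)
    moreover have "det (Qm c (-{i,j}) (\<lambda>_. 0)) = c$i$i * c$j$j - c$i$j * c$j$i"
      by (subst det_two_rows[of i j]) (use ij in \<open>auto simp: Qm_def\<close>)
    ultimately have "c$i$j * c$i$j = 0" using diag symc[of i j] by simp
    then show ?thesis by simp
  qed
  have "c = 0" using diag off by (metis vec_eq_iff zero_index)
  then show ?thesis unfolding c_def by simp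
qed
end
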